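(* Let $R>0$ and $f$ be as defined below. For all $d\ge0$ and $r\ge R$, $$f(d,r)\le f_\sqcap(d,r):=\frac2R\mathbb{1}_{[d-R,d+R]}(r),$$ $$f(d,r)\ge f_\wedge(d,r):=\frac{2(R-d+r)}{\pi R^2}\mathbb{1}_{(d-R,d)}(r)+\frac{2(d+R-r)}{\pi R^2}\mathbb{1}_{[d,d+R)}(r).$$
   Context: For $d\ge0$, $r\ge0$: $f(d,r)=2r/R^2$ if $r\le R-d$; $f(d,r)=0$ if $r>R+d$ or $r<d-R$; and $f(d,r)=\frac{2r}{\pi R^2}\arccos\big(\frac{d^2+r^2-R^2}{2dr}\big)$ otherwise. (This is the $r$-derivative of $|B_r(0)\cap B_R(\mathbf{y})|/(\pi R^2)$ with $|\mathbf{y}|=d$.) *)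

theory Defs
  imports Complex_Main
begin

definition f :: "real \<Rightarrow> real \<Rightarrow> real \<Rightarrow> real" where
  "f R d r =
     (if r \<le> R - d then 2 * r / R^2
      else if r > R + d \<or> r < d - R then 0
      else 2 * r / (pi * R^2) * arccos ((d^2 + r^2 - R^2) / (2 * d * r)))"

definition indic_set :: "real set \<Rightarrow> real \<Rightarrow> real" where
  "indic_set A x = (if x \<in> A then 1 else 0)"

definition f_box :: "real \<Rightarrow> real \<Rightarrow> real \<Rightarrow> real" where
  "f_box R d r = 2 / R * indic_set {d - R .. d + R} r"

definition f_wedge :: "real \<Rightarrow> real \<Rightarrow> real \<Rightarrow> real" where
  "f_wedge R d r = 2 * (R - d + r) / (pi * R^2) * indic_set {d - R <..< d} r
                 + 2 * (d + R - r) / (pi * R^2) * indic_set {d ..< d + R} r"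

end

theory Submission
  imports Defs "HOL-Analysis.Complex_Transcendental"
begin

lemma sin_ge_third:
  fixes t :: real
  assumes "0 \<le> t" "t \<le> pi/2"
  shows "t / 3 \<le> sin t"
proof -
  have "\<bar>sin t - (\<Sum>m<3. sin_coeff m * t ^ m)\<bar> \<le> inverse (fact 3) * \<bar>t\<bar> ^ 3"
    by (rule Maclaurin_sin_bound)
  moreover have "(\<Sum>m<3. sin_coeff m * t ^ m) = t"
    by (simp add: eval_nat_numeral sin_coeff_def)
  moreover have "inverse (fact 3) = (1/6::real)" by (simp add: fact_numeral)
  ultimately have "\<bar>sin t - t\<bar> \<le> t^3/6" using assms by simp
  moreover have "-(sin t - t) \<le> \<bar>sin t - t\<bar>" by (rule abs_ge_minus_self)
  ultimately have h: "t - t^3/6 \<le> sin t" by linarith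
  have "t \<le> 2" using assms pi_less_4 by linarith
  hence "t^2 \<le> 2^2" using assms by (intro power_mono) auto
  hence "t^2 \<le> 4" by simp
  hence "t^3 \<le> 4 * t" using assms by (simp add: power3_eq_cube power2_eq_square mult_right_mono)
  thus ?thesis using h by linarith
qed

lemma arccos_upper:
  fixes x :: real
  assumes "0 \<le> x" "x \<le> 1"
  shows "arccos x \<le> 3 * sqrt (1 - x^2)"
proof -
  have b: "0 \<le> arccos x" "arccos x \<le> pi/2"
    using arccos_bounded[of x] arccos_le_pi2[of x] assms by auto
  have "arccos x / 3 \<le> sin (arccos x)" using sin_ge_third b by blast
  thus ?thesis using sin_arccos[of x] assms by simp
qed

lemma arccos_lower:
  fixes x :: real
  assumes "-1 \<le> x" "x \<le> 1"
  shows "2 * (1 - x) \<le> (arccos x)^2"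
proof -
  let ?t = "arccos x"
  have c: "cos ?t = x" using assms by simp
  have "cos ?t = 1 - 2 * (sin (?t/2))^2"
    using cos_double_sin[of "?t/2"] by simp
  moreover have "(sin (?t/2))^2 \<le> (?t/2)^2"
    using abs_sin_x_le_abs_x[of "?t/2"] by (metis power2_abs abs_ge_zero power_mono)
  ultimately show ?thesis using c by (simp add: power_divide)
qed

theorem lemma4p8:
  fixes R d r :: real
  assumes "R > 0" and "d \<ge> 0" and "r \<ge> R"
  shows "f R d r \<le> f_box R d r \<and> f R d r \<ge> f_wedge R d r"
proof (cases "r \<le> R - d")
  case True
  hence "d = 0" "r = R" using assms by auto
  thus ?thesis using assms
    by (simp add: f_def f_box_def f_wedge_def indic_set_def power2_eq_square)
next
  case A: False
  show ?thesis
  proof (cases "r > R + d \<or> r < d - R")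
    case True
    thus ?thesis using A assms
      by (auto simp add: f_def f_box_def f_wedge_def indic_set_def)
  next
    case False
    hence r1: "d - R \<le> r" "r \<le> R + d" by auto
    have dpos: "d > 0" using A assms r1 by auto
    have rpos: "r > 0" using assms by auto
    define x where "x = (d^2 + r^2 - R^2) / (2 * d * r)"
    define t where "t = arccos x"
    have fe: "f R d r = 2 * r / (pi * R^2) * t"
      using A False by (simp add: f_def x_def t_def)
    have be: "f_box R d r = 2 / R" using r1 by (simp add: f_box_def indic_set_def)
    have "R^2 \<le> r^2" using assms by (intro power_mono) auto
    hence x0: "0 \<le> x" unfolding x_def using dpos rpos
      by (intro divide_nonneg_pos) (auto, metis zero_le_power2 add_increasing diff_ge_0_iff_ge)
    have "d^2 + r^2 - R^2 \<le> 2 * d * r"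
    proof -
      have "(r - d)^2 \<le> R^2" using r1 assms
        by (intro power2_le_iff_abs_le[THEN iffD2]) auto
      thus ?thesis by (simp add: power2_eq_square algebra_simps)
    qed
    hence x1: "x \<le> 1" unfolding x_def using dpos rpos by simp
    have chord: "r^2 * (1 - x^2) \<le> R^2"
    proof -
      have "(2*d*r)^2 * (r^2 * (1 - x^2)) = r^2 * ((2*d*r)^2 - (d^2 + r^2 - R^2)^2)"
        unfolding x_def using dpos rpos by (simp add: field_simps power2_eq_square)
      also have "\<dots> = r^2 * (4 * d^2 * R^2 - (r^2 - R^2 - d^2)^2)"
        by (simp add: power2_eq_square algebra_simps)
      also have "\<dots> \<le> r^2 * (4 * d^2 * R^2)"
        by (intro mult_left_mono) auto
      also have "\<dots> = (2*d*r)^2 * R^2" by (simp add: power2_eq_square)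
      finally show ?thesis using dpos rpos by simp
    qed
    have t0: "0 \<le> t" unfolding t_def using arccos_bounded[of x] x0 x1 by auto
    have up: "t \<le> 3 * sqrt (1 - x^2)" unfolding t_def using arccos_upper x0 x1 by blast
    have "r * sqrt (1 - x^2) \<le> R"
    proof -
      have "r * sqrt (1 - x^2) = sqrt (r^2 * (1 - x^2))" using rpos by (simp add: real_sqrt_mult)
      also have "\<dots> \<le> sqrt (R^2)" by (rule real_sqrt_le_mono[OF chord])
      finally show ?thesis using assms by simp
    qed
    moreover have "r * t \<le> r * (3 * sqrt (1 - x^2))" using up rpos by (intro mult_left_mono) auto
    ultimately have "r * t \<le> 3 * R" by linarith
    moreover have "3 * R \<le> pi * R" using pi_gt3 assms by simp
    ultimately have rtp: "r * t \<le> pi * R" by linarith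
    have "f R d r = 2 * (r * t) / (pi * R^2)" unfolding fe by simp
    also have "\<dots> \<le> 2 * (pi * R) / (pi * R^2)"
      using rtp assms by (intro divide_right_mono) auto
    also have "\<dots> = 2 / R" using assms by (simp add: power2_eq_square)
    finally have upper: "f R d r \<le> f_box R d r" unfolding be .
    have low: "2 * (1 - x) \<le> t^2" unfolding t_def using arccos_lower x0 x1 by simp
    define s where "s = \<bar>d - r\<bar>"
    have s1: "s \<le> R" "0 \<le> s" using r1 s_def by auto
    have ss: "s^2 = (d - r)^2" unfolding s_def by simp
    have id: "2 * r^2 * (1 - x) = r * (R^2 - s^2) / d"
      unfolding x_def ss using dpos rpos by (simp add: field_simps power2_eq_square)
    have key: "d * (R - s) \<le> r * (R + s)"
    proof (cases "d \<le> r")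
      case True
      hence "0 \<le> (r - d) * (R + r + d)" using assms by simp
      thus ?thesis using True unfolding s_def by (simp add: algebra_simps)
    next
      case False
      hence "(d - r) * R \<le> (d - r) * (d + r)" using r1 assms by (intro mult_left_mono) auto
      thus ?thesis using False unfolding s_def by (simp add: algebra_simps)
    qed
    have "(R - s)^2 \<le> r * (R^2 - s^2) / d"
    proof -
      have "d * (R - s) * (R - s) \<le> r * (R + s) * (R - s)" using s1 key by (intro mult_right_mono) auto
      thus ?thesis using dpos by (simp add: field_simps power2_eq_square)
    qed
    also have "\<dots> = r^2 * (2 * (1 - x))" using id by (simp add: algebra_simps)
    also have "\<dots> \<le> r^2 * t^2" using low by (intro mult_left_mono) auto
    also have "\<dots> = (r * t)^2" by (simp add: power_mult_distrib)
    finally have "(R - s)^2 \<le> (r * t)^2" .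
    moreover have "0 \<le> r * t" using rpos t0 by simp
    ultimately have rt: "R - s \<le> r * t" by (rule power2_le_imp_le)
    have ge: "0 \<le> 2 * (R - s) / (pi * R^2)" using s1 by simp
    have we: "f_wedge R d r \<le> 2 * (R - s) / (pi * R^2)"
    proof (cases "r < d")
      case True
      hence "s = d - r" by (simp add: s_def)
      moreover have "r \<notin> {d ..< d + R}" using True by simp
      show ?thesis
      proof (cases "r \<in> {d - R <..< d}")
        case True
        hence "f_wedge R d r = 2 * (R - d + r) / (pi * R^2)"
          using \<open>r \<notin> {d ..< d + R}\<close> unfolding f_wedge_def indic_set_def by simp
        also have "R - d + r = R - s" using \<open>s = d - r\<close> by simp
        finally show ?thesis by simp
      next
        case False
        hence "f_wedge R d r = 0"
          using \<open>r \<notin> {d ..< d + R}\<close> unfolding f_wedge_def indic_set_def by simp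
        thus ?thesis using ge by simp
      qed
    next
      case False
      hence "s = r - d" by (simp add: s_def)
      moreover have "r \<notin> {d - R <..< d}" using False by simp
      show ?thesis
      proof (cases "r \<in> {d ..< d + R}")
        case True
        hence "f_wedge R d r = 2 * (d + R - r) / (pi * R^2)"
          using \<open>r \<notin> {d - R <..< d}\<close> unfolding f_wedge_def indic_set_def by simp
        also have "d + R - r = R - s" using \<open>s = r - d\<close> by simp
        finally show ?thesis by simp
      next
        case False
        hence "f_wedge R d r = 0"
          using \<open>r \<notin> {d - R <..< d}\<close> unfolding f_wedge_def indic_set_def by simp
        thus ?thesis using ge by simp
      qed
    qed
    have "2 * (R - s) / (pi * R^2) \<le> 2 * r * t / (pi * R^2)"
      using rt assms by (intro divide_right_mono) auto
    hence "f_wedge R d r \<le> f R d r" using we fe by simp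
    thus ?thesis using upper by simp
  qed
qed

end
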